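(* Let $f\in\mathcal{C}(\mathbb{R}^{\mathbb{N}})$ and $x_{0}\in\mathbb{R}^{\mathbb{N}}$ such that $f(x_{0})\neq 0$. Then, $f\notin L^{p}(\mu)$ for every $1\leq p < \infty$. In particular, it holds that $\mathcal{C}(\mathbb{R}^{\mathbb{N}})\cap L^{p}(\mu)=\{0\}$ for each $1\leq p < \infty$.
   Context: $\mathcal{C}(\mathbb{R}^{\mathbb{N}})$ denotes the space of continuous functions $f:\mathbb{R}^{\mathbb{N}}\to\mathbb{R}$, where $\mathbb{R}^{\mathbb{N}}$ carries the product topology. Let $\mathcal{B}$ be the Borel $\sigma$-algebra of $\mathbb{R}$, $\lambda$ the Lebesgue measure, and $\mathcal{B}_{\infty}$ the $\sigma$-algebra on $\mathbb{R}^{\mathbb{N}}$ generated by the cylinder sets $\prod_{i=1}^{m}C_{i}\times\prod_{i=m+1}^{\infty}\mathbb{R}$ with $C_i\in\mathcal{B}$, $m\in\mathbb{N}$ (equal to the Borel $\sigma$-algebra of the product topology). Let $\mathcal{F}(\mathcal{B},\lambda)$ be the set of finite rectangles $\prod_{i\in\mathbb{N}}C_{i}$ with $C_i\in\mathcal{B}$ and $\prod_{i}\lambda(C_i)\in[0,\infty)$, with $\mathrm{vol}(\prod_{i}C_i):=\prod_i\lambda(C_i)$. The measure $\mu$ is the restriction to $\mathcal{B}_{\infty}$ of the outer measure $\mu^{\ast}(A):=\inf\{\sum_{n}\mathrm{vol}(\mathscr{C}_{n}) : \mathscr{C}_{n}\in\mathcal{F}(\mathcal{B},\lambda),\ A\subset\bigcup_{n}\mathscr{C}_{n}\}$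 ($\inf\varnothing=\infty$). *)

theory Defs
  imports "HOL-Analysis.Analysis"
begin

text \<open>R^N is modelled as the type nat => real, which carries the product
topology (instance from Function_Topology).\<close>

definition cylinders :: "(nat \<Rightarrow> real) set set" where
  "cylinders = {Pi\<^sub>E UNIV C | C m. (\<forall>i. C i \<in> sets borel) \<and> (\<forall>i\<ge>m. C i = UNIV)}"

definition B_inf :: "(nat \<Rightarrow> real) set set" where
  "B_inf = sigma_sets UNIV cylinders"

text \<open>A sequence of Borel sets C represents a finite rectangle prod_i C_i with
volume v: the infinite product of the Lebesgue measures converges (as the limit
of partial products, in [0,inf]) to the finite value v.\<close>
definition finite_rect_vol :: "(nat \<Rightarrow> real set) \<Rightarrow> ennreal \<Rightarrow> bool" where
  "finite_rect_vol C v \<longleftrightarrow> (\<forall>i. C i \<in> sets borel) \<and>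
     ((\<lambda>n. \<Prod>i<n. emeasure lborel (C i)) \<longlonglongrightarrow> v) \<and> v < \<infinity>"

definition mu_outer :: "(nat \<Rightarrow> real) set \<Rightarrow> ennreal" where
  "mu_outer A = Inf {(\<Sum>n. v n) | C v.
       (\<forall>n. finite_rect_vol (C n) (v n)) \<and> A \<subseteq> (\<Union>n. Pi\<^sub>E UNIV (C n))}"

definition mu :: "(nat \<Rightarrow> real) measure" where
  "mu = measure_of UNIV B_inf mu_outer"

definition in_Lp :: "(nat \<Rightarrow> real) measure \<Rightarrow> real \<Rightarrow> ((nat \<Rightarrow> real) \<Rightarrow> real) \<Rightarrow> bool" where
  "in_Lp M p f \<longleftrightarrow> f \<in> borel_measurable M \<and> (\<integral>\<^sup>+ x. ennreal (\<bar>f x\<bar> powr p) \<partial>M) < \<infinity>"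

end

theory Submission
  imports Defs "HOL-Probability.Probability"
begin

lemma prod_upd_factor:
  fixes g :: "nat \<Rightarrow> ennreal"
  assumes "k < n"
  shows "(\<Prod>i<n. (g(k:=d)) i) = d * (\<Prod>i\<in>{..<n}-{k}. g i)"
proof -
  have "(\<Prod>i<n. (g(k:=d)) i) = (g(k:=d)) k * (\<Prod>i\<in>{..<n}-{k}. (g(k:=d)) i)"
    using assms by (intro prod.remove) auto
  also have "(\<Prod>i\<in>{..<n}-{k}. (g(k:=d)) i) = (\<Prod>i\<in>{..<n}-{k}. g i)"
    by (intro prod.cong) auto
  finally show ?thesis by simp
qed

lemma ennreal_inv_cancel:
  "0 < (c::ennreal) \<Longrightarrow> c < \<infinity> \<Longrightarrow> inverse c * (c * x) = x"
  by (metis divide_ennreal_def ennreal_divide_self infinity_ennreal_def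
    more_arith_simps(5) mult.commute mult.left_commute not_less_zero)

lemma ennreal_inv_cancel':
  "0 < (c::ennreal) \<Longrightarrow> c < \<infinity> \<Longrightarrow> c * (inverse c * x) = x"
  by (metis ennreal_inv_cancel mult.left_commute)

lemma ennreal_inv_fin:
  "0 < (c::ennreal) \<Longrightarrow> c < \<infinity> \<Longrightarrow> d < \<infinity> \<Longrightarrow> v < \<infinity> \<Longrightarrow> d * (inverse c * v) < \<infinity>"
  by (metis ennreal_inverse_eq_top_iff ennreal_mult_less_top
    infinity_ennreal_def neq_top_trans not_less_zero
    verit_comp_simplify1(3))

lemma split_rect:
  assumes "finite_rect_vol C v"
  shows "\<exists>w. v = emeasure lborel (C k) * w \<and> (\<forall>D. D \<in> sets borel \<longrightarrow> emeasure lborel D \<le> emeasure lborel (C k) \<longrightarrow> finite_rect_vol (C(k:=D)) (emeasure lborel D * w))"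
proof -
  define L where "L = (\<lambda>A::real set. emeasure lborel A)"
  define Q where "Q = (\<lambda>n. \<Prod>i\<in>{..<n}-{k}. L (C i))"
  have ev: "eventually (\<lambda>n. k < n) sequentially" by (rule eventually_gt_at_top)
  have fac: "eventually (\<lambda>n. (\<Prod>i<n. L ((C(k:=D)) i)) = L D * Q n) sequentially" for D
    using ev proof eventually_elim
    case (elim n)
    have "(\<Prod>i<n. L ((C(k:=D)) i)) = (\<Prod>i<n. ((L o C)(k:= L D)) i)"
      by (intro prod.cong) auto
    also have "\<dots> = L D * (\<Prod>i\<in>{..<n}-{k}. (L o C) i)"
      using elim by (rule prod_upd_factor)
    finally show ?case by (simp add: Q_def)
  qed
  have C: "\<forall>i. C i \<in> sets borel" and vlim: "(\<lambda>n. \<Prod>i<n. L (C i)) \<longlonglongrightarrow> v" and vfin: "v < \<infinity>"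
    using assms unfolding finite_rect_vol_def L_def by auto
  have lim: "(\<lambda>n. L (C k) * Q n) \<longlonglongrightarrow> v"
  proof -
    have "(\<lambda>n. \<Prod>i<n. L ((C(k:=C k)) i)) \<longlonglongrightarrow> v" using vlim by simp
    then show ?thesis using tendsto_cong[OF fac[of "C k"]] by simp
  qed
  have goal: "finite_rect_vol (C(k:=D)) (L D * w)"
    if "D \<in> sets borel" "(\<lambda>n. L D * Q n) \<longlonglongrightarrow> L D * w" "L D * w < \<infinity>" for D w
  proof -
    have "(\<lambda>n. \<Prod>i<n. L ((C(k:=D)) i)) \<longlonglongrightarrow> L D * w"
      using tendsto_cong[OF fac[of D]] that(2) by simp
    then show ?thesis using that C by (auto simp: finite_rect_vol_def L_def)
  qed
  consider "L (C k) = 0" | "L (C k) = \<infinity>" | "0 < L (C k)" "L (C k) < \<infinity>"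
    by (metis infinity_ennreal_def less_top not_gr_zero)
  then show ?thesis
  proof cases
    case 1
    have "(\<lambda>n. L (C k) * Q n) \<longlonglongrightarrow> 0" using 1 by simp
    then have v0: "v = 0" using lim LIMSEQ_unique by blast
    show ?thesis
    proof (intro exI[of _ 0] conjI allI impI)
      show "v = emeasure lborel (C k) * 0" using v0 by simp
      fix D :: "real set" assume "D \<in> sets borel" "emeasure lborel D \<le> emeasure lborel (C k)"
      then have "L D = 0" using 1 unfolding L_def by simp
      then show "finite_rect_vol (C(k := D)) (emeasure lborel D * 0)"
        using goal[of D 0] \<open>D \<in> sets borel\<close> by (simp add: L_def)
    qed
  next
    case 2
    have "eventually (\<lambda>n. L (C k) * Q n < \<infinity>) sequentially"
      using lim vfin by (rule order_tendstoD)
    then have evQ: "eventually (\<lambda>n. Q n = 0) sequentially"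
      by eventually_elim (use 2 in \<open>auto simp: ennreal_mult_less_top\<close>)
    have "eventually (\<lambda>n. L (C k) * Q n = 0) sequentially"
      using evQ by eventually_elim simp
    then have "(\<lambda>n. L (C k) * Q n) \<longlonglongrightarrow> 0" by (rule tendsto_eventually)
    then have v0: "v = 0" using lim LIMSEQ_unique by blast
    show ?thesis
    proof (intro exI[of _ 0] conjI allI impI)
      show "v = emeasure lborel (C k) * 0" using v0 by simp
      fix D :: "real set" assume D: "D \<in> sets borel"
      have "eventually (\<lambda>n. L D * Q n = 0) sequentially"
        using evQ by eventually_elim simp
      then have "(\<lambda>n. L D * Q n) \<longlonglongrightarrow> L D * 0" by (simp add: tendsto_eventually)
      then show "finite_rect_vol (C(k := D)) (emeasure lborel D * 0)"
        using goal[of D 0] D by (simp add: L_def)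
    qed
  next
    case 3
    define c where "c = L (C k)"
    have cinv: "inverse c * (c * x) = x" for x
      using 3 unfolding c_def by (rule ennreal_inv_cancel)
    have "(\<lambda>n. inverse c * (c * Q n)) \<longlonglongrightarrow> inverse c * v"
      using lim unfolding c_def[symmetric] by (intro ennreal_tendsto_cmult) (use 3 c_def in \<open>simp add: less_top[symmetric] ennreal_inverse_eq_top_iff\<close>)
    then have Qlim: "Q \<longlonglongrightarrow> inverse c * v" by (simp add: cinv)
    show ?thesis
    proof (intro exI[of _ "inverse c * v"] conjI allI impI)
      show "v = emeasure lborel (C k) * (inverse c * v)"
        using 3 unfolding c_def by (simp add: ennreal_inv_cancel' L_def)
      fix D :: "real set" assume D: "D \<in> sets borel" and le: "emeasure lborel D \<le> emeasure lborel (C k)"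
      then have Dfin: "L D < \<infinity>" using 3 unfolding L_def by auto
      have "(\<lambda>n. L D * Q n) \<longlonglongrightarrow> L D * (inverse c * v)"
        using Dfin Qlim by (intro ennreal_tendsto_cmult) auto
      moreover have "L D * (inverse c * v) < \<infinity>"
        using Dfin vfin 3 unfolding c_def by (intro ennreal_inv_fin)
      ultimately show "finite_rect_vol (C(k := D)) (emeasure lborel D * (inverse c * v))"
        using goal[of D "inverse c * v"] D by (simp add: L_def)
    qed
  qed
qed

lemma mu_outer_le:
  "(\<forall>n. finite_rect_vol (C n) (v n)) \<Longrightarrow> A \<subseteq> (\<Union>n. Pi\<^sub>E UNIV (C n)) \<Longrightarrow> mu_outer A \<le> (\<Sum>n. v n)"
  unfolding mu_outer_def by (rule Inf_lower) blast

lemma mu_outer_geI: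
  "(\<And>C v. \<forall>n. finite_rect_vol (C n) (v n) \<Longrightarrow> A \<subseteq> (\<Union>n. Pi\<^sub>E UNIV (C n)) \<Longrightarrow> b \<le> (\<Sum>n. v n)) \<Longrightarrow> b \<le> mu_outer A"
  unfolding mu_outer_def by (rule Inf_greatest) blast

lemma mu_outer_close:
  "mu_outer A < x \<Longrightarrow> \<exists>C v. (\<forall>n. finite_rect_vol (C n) (v n)) \<and> A \<subseteq> (\<Union>n. Pi\<^sub>E UNIV (C n)) \<and> (\<Sum>n. v n) < x"
  unfolding mu_outer_def by (simp add: Inf_less_iff) blast

lemma frv_empty: "finite_rect_vol (\<lambda>_. {}) 0"
proof -
  have "eventually (\<lambda>n. (\<Prod>i<n. emeasure lborel ({}::real set)) = 0) sequentially"
    using eventually_gt_at_top[of 0] by eventually_elim simp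
  then have "(\<lambda>n. \<Prod>i<n. emeasure lborel ({}::real set)) \<longlonglongrightarrow> 0"
    by (rule tendsto_eventually)
  then show ?thesis unfolding finite_rect_vol_def by simp
qed

lemma mu_outer_empty: "mu_outer {} = 0"
  using mu_outer_le[of "\<lambda>_ _. {}" "\<lambda>_. 0" "{}"] frv_empty by simp

lemma mu_outer_mono: "A \<subseteq> B \<Longrightarrow> mu_outer A \<le> mu_outer B"
  by (rule mu_outer_geI, unfold mu_outer_def) (rule Inf_lower, blast)

lemma mu_outer_countably_subadditive:
  "mu_outer (\<Union>i. A i) \<le> (\<Sum>n. mu_outer (A n))"
proof (rule ennreal_le_epsilon)
  fix e :: real assume "0 < e" "(\<Sum>n. mu_outer (A n)) < top"
  then have *: "\<And>n. mu_outer (A n) < mu_outer (A n) + e * (1/2)^Suc n"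
    by (auto simp add: less_top dest!: ennreal_suminf_lessD)
  have "\<forall>n. \<exists>Cv. (\<forall>i. finite_rect_vol (fst Cv i) (snd Cv i)) \<and> A n \<subseteq> (\<Union>i. Pi\<^sub>E UNIV (fst Cv i))
            \<and> (\<Sum>i. snd Cv i) < mu_outer (A n) + e * (1/2)^Suc n"
    using mu_outer_close[OF *] by fastforce
  then obtain Cv where Cv: "\<And>n. (\<forall>i. finite_rect_vol (fst (Cv n) i) (snd (Cv n) i))"
      "\<And>n. A n \<subseteq> (\<Union>i. Pi\<^sub>E UNIV (fst (Cv n) i))"
      "\<And>n. (\<Sum>i. snd (Cv n) i) < mu_outer (A n) + e * (1/2)^Suc n"
    by metis
  define C where "C = (\<lambda>k. case prod_decode k of (n, i) \<Rightarrow> fst (Cv n) i)"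
  define v where "v = (\<lambda>k. case prod_decode k of (n, i) \<Rightarrow> snd (Cv n) i)"
  have frv: "\<forall>k. finite_rect_vol (C k) (v k)"
    using Cv(1) by (auto simp: C_def v_def split: prod.split)
  have cov: "(\<Union>i. A i) \<subseteq> (\<Union>k. Pi\<^sub>E UNIV (C k))"
  proof
    fix x assume "x \<in> (\<Union>i. A i)"
    then obtain n where "x \<in> A n" by auto
    then obtain i where "x \<in> Pi\<^sub>E UNIV (fst (Cv n) i)" using Cv(2) by blast
    then have "x \<in> Pi\<^sub>E UNIV (C (prod_encode (n, i)))" by (simp add: C_def)
    then show "x \<in> (\<Union>k. Pi\<^sub>E UNIV (C k))" by blast
  qed
  have "mu_outer (\<Union>i. A i) \<le> (\<Sum>k. v k)"
    by (rule mu_outer_le[OF frv cov])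
  also have "\<dots> = (\<Sum>n. \<Sum>i. snd (Cv n) i)"
    unfolding v_def by (rule suminf_ennreal_2dimen[where f="\<lambda>(n,i). snd (Cv n) i", simplified]) simp
  also have "\<dots> \<le> (\<Sum>n. mu_outer (A n) + e * (1/2) ^ Suc n)"
    using Cv(3) by (intro suminf_le) (auto intro: less_imp_le)
  also have "... = (\<Sum>n. mu_outer (A n)) + (\<Sum>n. ennreal e * ennreal ((1/2) ^ Suc n))"
    using \<open>0 < e\<close> by (subst suminf_add[symmetric])
                     (auto simp del: ennreal_suminf_cmult simp add: ennreal_mult[symmetric])
  also have "\<dots> = (\<Sum>n. mu_outer (A n)) + e"
    unfolding ennreal_suminf_cmult
    by (subst suminf_ennreal_eq[OF zero_le_power power_half_series]) auto
  finally show "mu_outer (\<Union>i. A i) \<le> (\<Sum>n. mu_outer (A n)) + e" .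
qed

lemma outer_mu: "outer_measure_space (Pow UNIV) mu_outer"
  unfolding outer_measure_space_def positive_def increasing_def countably_subadditive_def
  using mu_outer_empty mu_outer_mono mu_outer_countably_subadditive by auto

lemma mu_outer_subadd: "mu_outer (A \<union> B) \<le> mu_outer A + mu_outer B"
proof -
  interpret ring_of_sets UNIV "Pow UNIV"
    using algebra_Pow algebra.axioms(1) by blast
  have "subadditive (Pow UNIV) mu_outer"
    using outer_mu unfolding outer_measure_space_def
    by (intro countably_subadditive_subadditive) auto
  then have "mu_outer (A \<union> (B - A)) \<le> mu_outer A + mu_outer (B - A)"
    unfolding subadditive_def by blast
  also have "\<dots> \<le> mu_outer A + mu_outer B"
    by (intro add_mono mu_outer_mono) auto
  finally show ?thesis by simp
qed

lemma coord_lambda: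
  assumes B: "B \<in> sets borel"
  shows "{x. x k \<in> B} \<in> lambda_system UNIV (Pow UNIV) mu_outer"
proof -
  let ?E = "{x::nat\<Rightarrow>real. x k \<in> B}"
  have "mu_outer (?E \<inter> T) + mu_outer ((UNIV - ?E) \<inter> T) = mu_outer T" for T
  proof (rule antisym)
    show "mu_outer (?E \<inter> T) + mu_outer ((UNIV - ?E) \<inter> T) \<le> mu_outer T"
    proof (rule mu_outer_geI)
      fix C :: "nat \<Rightarrow> nat \<Rightarrow> real set" and v :: "nat \<Rightarrow> ennreal" assume frv: "\<forall>n. finite_rect_vol (C n) (v n)" and cov: "T \<subseteq> (\<Union>n. Pi\<^sub>E UNIV (C n))"
      have "\<forall>n. \<exists>w. v n = emeasure lborel (C n k) * w \<and> (\<forall>D. D \<in> sets borel \<longrightarrow> emeasure lborel D \<le> emeasure lborel (C n k) \<longrightarrow> finite_rect_vol ((C n)(k:=D)) (emeasure lborel D * w))"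
        using frv split_rect by blast
      then obtain w where w: "\<And>n. v n = emeasure lborel (C n k) * w n"
        "\<And>n D. D \<in> sets borel \<Longrightarrow> emeasure lborel D \<le> emeasure lborel (C n k) \<Longrightarrow> finite_rect_vol ((C n)(k:=D)) (emeasure lborel D * w n)"
        by metis
      have Cb: "C n k \<in> sets borel" for n using frv unfolding finite_rect_vol_def by auto
      define C1 where "C1 = (\<lambda>n. (C n)(k := C n k \<inter> B))"
      define C2 where "C2 = (\<lambda>n. (C n)(k := C n k - B))"
      define v1 where "v1 = (\<lambda>n. emeasure lborel (C n k \<inter> B) * w n)"
      define v2 where "v2 = (\<lambda>n. emeasure lborel (C n k - B) * w n)"
      have f1: "\<forall>n. finite_rect_vol (C1 n) (v1 n)"
        unfolding C1_def v1_def using Cb B by (intro allI w(2)) (auto intro!: emeasure_mono)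
      have f2: "\<forall>n. finite_rect_vol (C2 n) (v2 n)"
        unfolding C2_def v2_def using Cb B by (intro allI w(2)) (auto intro!: emeasure_mono)
      have c1: "?E \<inter> T \<subseteq> (\<Union>n. Pi\<^sub>E UNIV (C1 n))"
      proof
        fix x assume "x \<in> ?E \<inter> T"
        then obtain n where "x \<in> Pi\<^sub>E UNIV (C n)" "x k \<in> B" using cov by blast
        then have "x \<in> Pi\<^sub>E UNIV (C1 n)" by (auto simp: C1_def PiE_iff)
        then show "x \<in> (\<Union>n. Pi\<^sub>E UNIV (C1 n))" by blast
      qed
      have c2: "(UNIV - ?E) \<inter> T \<subseteq> (\<Union>n. Pi\<^sub>E UNIV (C2 n))"
      proof
        fix x assume "x \<in> (UNIV - ?E) \<inter> T"
        then obtain n where "x \<in> Pi\<^sub>E UNIV (C n)" "x k \<notin> B" using cov by blast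
        then have "x \<in> Pi\<^sub>E UNIV (C2 n)" by (auto simp: C2_def PiE_iff)
        then show "x \<in> (\<Union>n. Pi\<^sub>E UNIV (C2 n))" by blast
      qed
      have vsum: "v1 n + v2 n = v n" for n
      proof -
        have "v1 n + v2 n = (emeasure lborel (C n k \<inter> B) + emeasure lborel (C n k - B)) * w n"
          by (simp add: v1_def v2_def distrib_right)
        also have "emeasure lborel (C n k \<inter> B) + emeasure lborel (C n k - B) = emeasure lborel (C n k)"
          using Cb B by (subst plus_emeasure) (auto simp: Int_Diff_Un)
        finally show ?thesis using w(1) by simp
      qed
      have "mu_outer (?E \<inter> T) + mu_outer ((UNIV - ?E) \<inter> T) \<le> (\<Sum>n. v1 n) + (\<Sum>n. v2 n)"
        by (intro add_mono mu_outer_le[OF f1 c1] mu_outer_le[OF f2 c2])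
      also have "\<dots> = (\<Sum>n. v n)"
        by (subst suminf_add) (auto simp: vsum)
      finally show "mu_outer (?E \<inter> T) + mu_outer ((UNIV - ?E) \<inter> T) \<le> (\<Sum>n. v n)" .
    qed
  next
    have "T = (?E \<inter> T) \<union> ((UNIV - ?E) \<inter> T)" by blast
    then show "mu_outer T \<le> mu_outer (?E \<inter> T) + mu_outer ((UNIV - ?E) \<inter> T)"
      by (metis mu_outer_subadd)
  qed
  then show ?thesis unfolding lambda_system_def by auto
qed

lemma mu_measure_space: "measure_space UNIV B_inf mu_outer"
proof -
  interpret P: sigma_algebra UNIV "Pow UNIV" by (rule sigma_algebra_Pow)
  let ?L = "lambda_system UNIV (Pow UNIV) mu_outer"
  have ms: "measure_space UNIV ?L mu_outer"
    using P.caratheodory_lemma[OF outer_mu] by simp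
  then interpret L: sigma_algebra UNIV ?L unfolding measure_space_def by simp
  have "cylinders \<subseteq> ?L"
  proof
    fix X assume "X \<in> cylinders"
    then obtain C m where X: "X = Pi\<^sub>E UNIV C" and C: "\<forall>i. C i \<in> sets borel"
      unfolding cylinders_def by blast
    have "X = (\<Inter>i\<in>UNIV. {x. x i \<in> C i})" unfolding X by (auto simp: PiE_iff)
    also have "\<dots> \<in> ?L"
      using C coord_lambda L.top by (intro L.countable_INT'') auto
    finally show "X \<in> ?L" .
  qed
  then have "B_inf \<subseteq> ?L" unfolding B_inf_def by (rule L.sigma_sets_subset)
  moreover have "sigma_algebra UNIV B_inf"
    unfolding B_inf_def by (rule sigma_algebra_sigma_sets) auto
  ultimately show ?thesis using measure_down[OF ms] by blast
qed

lemma emeasure_mu: "A \<in> B_inf \<Longrightarrow> emeasure mu A = mu_outer A"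
  using mu_measure_space unfolding mu_def measure_space_def
  by (intro emeasure_measure_of_sigma) auto

lemma sets_mu: "sets mu = B_inf"
  unfolding mu_def B_inf_def
  by (simp add: sets_measure_of sigma_algebra.sigma_sets_eq sigma_algebra_sigma_sets subset_eq)

lemma mu_outer_lower:
  fixes a l :: "nat \<Rightarrow> real" and S :: "nat set" and A :: "(nat \<Rightarrow> real) set"
  assumes l: "\<And>i. 0 < l i" and S: "finite S" "\<And>i. i \<notin> S \<Longrightarrow> l i = 1"
    and box: "Pi UNIV (\<lambda>i. {a i..a i + l i}) \<subseteq> A"
  shows "ennreal (\<Prod>i\<in>S. l i) \<le> mu_outer A"
proof (rule mu_outer_geI)
  fix C :: "nat \<Rightarrow> nat \<Rightarrow> real set" and v :: "nat \<Rightarrow> ennreal"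
  assume frv: "\<forall>n. finite_rect_vol (C n) (v n)" and cov: "A \<subseteq> (\<Union>n. Pi\<^sub>E UNIV (C n))"
  define L where "L = (\<Prod>i\<in>S. l i)"
  define I where "I = (\<lambda>i. {a i..a i + l i})"
  define M where "M = (\<lambda>i. uniform_measure lborel (I i))"
  have lbI: "emeasure lborel (I i) = ennreal (l i)" for i
    using l[of i] unfolding I_def by simp
  have prob: "prob_space (M i)" for i
    unfolding M_def using lbI[of i] l[of i] by (intro prob_space_uniform_measure) auto
  interpret PP: product_prob_space M UNIV
    unfolding product_prob_space_def product_prob_space_axioms_def product_sigma_finite_def
    using prob by (auto intro: prob_space_imp_sigma_finite)
  let ?P = "PiM UNIV M"
  have setsM: "sets (M i) = sets borel" for i unfolding M_def by simp
  have spaceM: "space (M i) = UNIV" for i unfolding M_def by simp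
  have spaceP: "space ?P = UNIV" by (simp add: space_PiM spaceM)
  have Cb: "C n i \<in> sets borel" for n i using frv unfolding finite_rect_vol_def by auto
  have Rsets: "Pi\<^sub>E UNIV (C n) \<in> sets ?P" for n
    by (rule sets_PiM_I_countable) (auto simp: setsM Cb)
  have Mle: "emeasure (M i) X * ennreal (l i) \<le> emeasure lborel X" if "X \<in> sets borel" for i X
  proof -
    have "emeasure (M i) X = emeasure lborel (I i \<inter> X) / ennreal (l i)"
      unfolding M_def using that lbI[of i] by (simp add: I_def)
    then have "emeasure (M i) X * ennreal (l i) = emeasure lborel (I i \<inter> X)"
      using l[of i] by (simp add: ennreal_divide_times ennreal_divide_self)
    also have "\<dots> \<le> emeasure lborel X" using that by (intro emeasure_mono) auto
    finally show ?thesis .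
  qed
  obtain N0 where N0: "\<And>i. i \<in> S \<Longrightarrow> i < N0"
    using S(1) finite_nat_bounded by blast
  have prodN: "(\<Prod>i<N. ennreal (l i)) = ennreal L" if "N0 \<le> N" for N
  proof -
    have "(\<Prod>i<N. l i) = (\<Prod>i\<in>S. l i)"
      using N0 that S(2) by (intro prod.mono_neutral_right) (auto, meson less_le_trans)
    then show ?thesis unfolding L_def using l by (simp add: prod_ennreal less_imp_le)
  qed
  have step1: "emeasure ?P (Pi\<^sub>E UNIV (C n)) * ennreal L \<le> v n" for n
  proof (rule tendsto_lowerbound)
    show "(\<lambda>N. \<Prod>i<N. emeasure lborel (C n i)) \<longlonglongrightarrow> v n"
      using frv unfolding finite_rect_vol_def by auto
    show "eventually (\<lambda>N. emeasure ?P (Pi\<^sub>E UNIV (C n)) * ennreal L \<le> (\<Prod>i<N. emeasure lborel (C n i))) sequentially"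
      using eventually_ge_at_top[of N0]
    proof eventually_elim
      case (elim N)
      have "emeasure ?P (Pi\<^sub>E UNIV (C n)) \<le> emeasure ?P (prod_emb UNIV M {..<N} (Pi\<^sub>E {..<N} (C n)))"
      proof (rule emeasure_mono)
        show "Pi\<^sub>E UNIV (C n) \<subseteq> prod_emb UNIV M {..<N} (Pi\<^sub>E {..<N} (C n))"
          by (auto simp: prod_emb_def spaceM PiE_iff space_PiM)
        show "prod_emb UNIV M {..<N} (Pi\<^sub>E {..<N} (C n)) \<in> sets ?P"
          by (rule sets_PiM_I) (auto simp: setsM Cb)
      qed
      also have "\<dots> = (\<Prod>i<N. emeasure (M i) (C n i))"
        by (intro PP.emeasure_PiM_emb) (auto simp: setsM Cb)
      finally have "emeasure ?P (Pi\<^sub>E UNIV (C n)) * ennreal L \<le> (\<Prod>i<N. emeasure (M i) (C n i)) * (\<Prod>i<N. ennreal (l i))"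
        using prodN[OF elim] by (simp add: mult_right_mono)
      also have "\<dots> = (\<Prod>i<N. emeasure (M i) (C n i) * ennreal (l i))"
        by (simp add: prod.distrib)
      also have "\<dots> \<le> (\<Prod>i<N. emeasure lborel (C n i))"
        by (rule prod_mono_ennreal) (auto intro: Mle Cb)
      finally show ?case .
    qed
  qed simp
  define Nl where "Nl = (\<lambda>i. {x::nat\<Rightarrow>real. x i \<notin> I i})"
  have Nsets: "Nl i \<in> sets ?P" for i
  proof -
    have "Nl i = {x\<in>space ?P. x i \<in> UNIV - I i}" by (auto simp: Nl_def spaceP)
    also have "\<dots> \<in> sets ?P" by (rule sets_Collect_single) (auto simp: setsM I_def)
    finally show ?thesis .
  qed
  have N0m: "emeasure ?P (Nl i) = 0" for i
  proof -
    have "Nl i = {x\<in>space ?P. x i \<in> UNIV - I i}" by (auto simp: Nl_def spaceP)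
    moreover have "emeasure ?P {x\<in>space ?P. x i \<in> UNIV - I i} = emeasure (M i) (UNIV - I i)"
      by (rule PP.emeasure_PiM_Collect_single) (auto simp: setsM I_def)
    ultimately have "emeasure ?P (Nl i) = emeasure (M i) (UNIV - I i)" by simp
    also have "\<dots> = 0" unfolding M_def by (simp add: I_def Int_Diff)
    finally show ?thesis .
  qed
  have cover: "space ?P \<subseteq> (\<Union>n. Pi\<^sub>E UNIV (C n)) \<union> (\<Union>i. Nl i)"
  proof
    fix x assume "x \<in> space ?P"
    show "x \<in> (\<Union>n. Pi\<^sub>E UNIV (C n)) \<union> (\<Union>i. Nl i)"
    proof (cases "x \<in> (\<Union>i. Nl i)")
      case False
      then have "x \<in> Pi UNIV (\<lambda>i. {a i..a i + l i})" by (auto simp: Nl_def I_def)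
      then show ?thesis using box cov by blast
    qed simp
  qed
  have "1 = emeasure ?P (space ?P)" by (simp add: PP.emeasure_space_1)
  also have "\<dots> \<le> emeasure ?P ((\<Union>n. Pi\<^sub>E UNIV (C n)) \<union> (\<Union>i. Nl i))"
    using cover Rsets Nsets by (intro emeasure_mono) auto
  also have "\<dots> \<le> emeasure ?P (\<Union>n. Pi\<^sub>E UNIV (C n)) + emeasure ?P (\<Union>i. Nl i)"
    using Rsets Nsets by (intro emeasure_subadditive) auto
  also have "emeasure ?P (\<Union>i. Nl i) = 0"
    using N0m Nsets by (intro emeasure_UN_eq_0) auto
  also have "emeasure ?P (\<Union>n. Pi\<^sub>E UNIV (C n)) \<le> (\<Sum>n. emeasure ?P (Pi\<^sub>E UNIV (C n)))"
    using Rsets by (intro emeasure_subadditive_countably) auto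
  finally have one: "1 \<le> (\<Sum>n. emeasure ?P (Pi\<^sub>E UNIV (C n)))" by simp
  have "ennreal L = 1 * ennreal L" by simp
  also have "\<dots> \<le> (\<Sum>n. emeasure ?P (Pi\<^sub>E UNIV (C n))) * ennreal L"
    using one by (intro mult_right_mono) auto
  also have "\<dots> = (\<Sum>n. emeasure ?P (Pi\<^sub>E UNIV (C n)) * ennreal L)" by simp
  also have "\<dots> \<le> (\<Sum>n. v n)" by (intro suminf_le step1) auto
  finally show "ennreal (\<Prod>i\<in>S. l i) \<le> (\<Sum>n. v n)" unfolding L_def .
qed

lemma not_Lp:
  fixes f :: "(nat \<Rightarrow> real) \<Rightarrow> real" and x0 :: "nat \<Rightarrow> real" and p :: real
  assumes cont: "continuous_on UNIV f" and nz: "f x0 \<noteq> 0" and p: "1 \<le> p"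
  shows "\<not> in_Lp mu p f"
proof
  assume "in_Lp mu p f"
  then have fin: "(\<integral>\<^sup>+ x. ennreal (\<bar>f x\<bar> powr p) \<partial>mu) < \<infinity>" by (simp add: in_Lp_def)
  define c where "c = \<bar>f x0\<bar> / 2"
  have c: "0 < c" using nz by (simp add: c_def)
  have "open {x. c < \<bar>f x\<bar>}" using cont by (intro open_Collect_less continuous_intros) auto
  then have op: "openin (product_topology (\<lambda>i. euclidean) UNIV) {x. c < \<bar>f x\<bar>}"
    by (simp add: open_fun_def)
  have "x0 \<in> {x. c < \<bar>f x\<bar>}" using nz c_def by simp
  from product_topology_open_contains_basis[OF op this]
  obtain X where X: "x0 \<in> Pi\<^sub>E UNIV X" "\<And>i. open (X i)" "finite {i. X i \<noteq> UNIV}"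
      "Pi\<^sub>E UNIV X \<subseteq> {x. c < \<bar>f x\<bar>}"
    by auto
  define F where "F = {i. X i \<noteq> UNIV}"
  have "\<forall>i. \<exists>d>0. {x0 i..x0 i + d} \<subseteq> X i"
  proof
    fix i
    have "x0 i \<in> X i" using X(1) by (auto simp: PiE_iff)
    then obtain e where "e > 0" "cball (x0 i) e \<subseteq> X i" using X(2) open_contains_cball by blast
    moreover have "{x0 i..x0 i + e} \<subseteq> cball (x0 i) e" by (auto simp: cball_def dist_real_def)
    ultimately show "\<exists>d>0. {x0 i..x0 i + d} \<subseteq> X i" by blast
  qed
  then obtain \<delta> where \<delta>': "\<forall>i. 0 < \<delta> i \<and> {x0 i..x0 i + \<delta> i} \<subseteq> X i"
    by (auto dest!: choice)
  then have \<delta>: "\<And>i. 0 < \<delta> i" "\<And>i. {x0 i..x0 i + \<delta> i} \<subseteq> X i" by auto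
  have "finite F" using X(3) by (simp add: F_def)
  then obtain m where m': "F \<subseteq> {..<m}" by (rule finite_nat_bounded[THEN exE])
  then have m: "\<And>i. i \<in> F \<Longrightarrow> i < m" by auto
  define U where "U = Pi\<^sub>E UNIV X"
  have "U \<in> cylinders"
    unfolding cylinders_def U_def using X(2) m unfolding F_def
    by (intro CollectI exI[of _ X] exI[of _ m] conjI refl allI impI borel_open) (auto simp: not_less[symmetric])
  then have UB: "U \<in> B_inf" unfolding B_inf_def by (rule sigma_sets.Basic)
  define Dp where "Dp = (\<Prod>i\<in>F. \<delta> i)"
  have Dp: "0 < Dp" unfolding Dp_def using \<delta>(1) by (simp add: prod_pos)
  have lowK: "ennreal (K * Dp) \<le> mu_outer U" if K: "0 < K" for K
  proof -
    define l where "l = (\<lambda>i. if i \<in> F then \<delta> i else if i = m then K else 1)"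
    define a where "a = (\<lambda>i. if i \<in> F then x0 i else 0)"
    have mF: "m \<notin> F" using m by blast
    have "ennreal (\<Prod>i\<in>insert m F. l i) \<le> mu_outer U"
    proof (rule mu_outer_lower)
      show "0 < l i" for i using \<delta>(1) K by (simp add: l_def)
      show "finite (insert m F)" using X(3) F_def by simp
      show "i \<notin> insert m F \<Longrightarrow> l i = 1" for i by (simp add: l_def)
      show "Pi UNIV (\<lambda>i. {a i..a i + l i}) \<subseteq> U"
      proof
        fix x assume x: "x \<in> Pi UNIV (\<lambda>i. {a i..a i + l i})"
        have "x i \<in> X i" for i
        proof (cases "i \<in> F")
          case True
          have "x i \<in> {a i..a i + l i}" using x by blast
          then show ?thesis using True \<delta>(2)[of i] by (auto simp: a_def l_def)
        next
          case False
          then show ?thesis by (simp add: F_def)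
        qed
        then show "x \<in> U" by (simp add: U_def PiE_iff)
      qed
    qed
    moreover have "(\<Prod>i\<in>insert m F. l i) = K * Dp"
      using mF X(3) unfolding Dp_def F_def[symmetric]
      by (simp add: l_def cong: prod.cong)
    ultimately show ?thesis by simp
  qed
  have "mu_outer U = \<infinity>"
  proof (rule ccontr)
    assume "mu_outer U \<noteq> \<infinity>"
    then obtain r where r: "mu_outer U = ennreal r" "0 \<le> r" by (cases "mu_outer U") auto
    have "ennreal (((r + 1) / Dp) * Dp) \<le> mu_outer U"
      using Dp r(2) by (intro lowK) auto
    then have "ennreal (r + 1) \<le> ennreal r" using Dp r(1) by simp
    then show False using r(2) by (simp add: ennreal_le_iff)
  qed
  then have muU: "emeasure mu U = \<infinity>" using emeasure_mu[OF UB] by simp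
  have "ennreal (c powr p) * emeasure mu U = (\<integral>\<^sup>+ x. ennreal (c powr p) * indicator U x \<partial>mu)"
    using UB by (intro nn_integral_cmult_indicator[symmetric]) (simp add: sets_mu)
  also have "\<dots> \<le> (\<integral>\<^sup>+ x. ennreal (\<bar>f x\<bar> powr p) \<partial>mu)"
  proof (rule nn_integral_mono)
    fix x
    show "ennreal (c powr p) * indicator U x \<le> ennreal (\<bar>f x\<bar> powr p)"
    proof (cases "x \<in> U")
      case True
      then have "c < \<bar>f x\<bar>" using X(4) U_def by blast
      then have "c powr p \<le> \<bar>f x\<bar> powr p" using c p by (intro powr_mono2) auto
      then show ?thesis using True by simp
    qed simp
  qed
  finally have "\<infinity> \<le> (\<integral>\<^sup>+ x. ennreal (\<bar>f x\<bar> powr p) \<partial>mu)"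
    using muU c by (simp add: ennreal_mult_top)
  then show False using fin by simp
qed


theorem theoremA8:
  fixes f :: "(nat \<Rightarrow> real) \<Rightarrow> real" and x0 :: "nat \<Rightarrow> real"
  assumes "continuous_on UNIV f" and "f x0 \<noteq> 0"
  shows "(\<forall>p::real. 1 \<le> p \<longrightarrow> \<not> in_Lp mu p f) \<and>
         (\<forall>p::real. 1 \<le> p \<longrightarrow>
            {g :: (nat \<Rightarrow> real) \<Rightarrow> real. continuous_on UNIV g} \<inter> {g. in_Lp mu p g} = {\<lambda>x. 0})"
proof (intro conjI allI impI)
  fix p :: real assume p: "1 \<le> p"
  show "\<not> in_Lp mu p f" using not_Lp[OF assms p] .
  show "{g :: (nat \<Rightarrow> real) \<Rightarrow> real. continuous_on UNIV g} \<inter> {g. in_Lp mu p g} = {\<lambda>x. 0}"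
  proof (intro equalityI subsetI)
    fix g assume g: "g \<in> {g :: (nat \<Rightarrow> real) \<Rightarrow> real. continuous_on UNIV g} \<inter> {g. in_Lp mu p g}"
    have "g = (\<lambda>x. 0)"
    proof (rule ccontr)
      assume "g \<noteq> (\<lambda>x. 0)"
      then obtain y where "g y \<noteq> 0" by auto
      then show False using not_Lp[of g y p] g p by auto
    qed
    then show "g \<in> {\<lambda>x. 0}" by simp
  next
    fix g assume "g \<in> {\<lambda>x::nat \<Rightarrow> real. 0::real}"
    then have g: "g = (\<lambda>x. 0)" by simp
    have "in_Lp mu p g" unfolding in_Lp_def g using p by simp
    then show "g \<in> {g :: (nat \<Rightarrow> real) \<Rightarrow> real. continuous_on UNIV g} \<inter> {g. in_Lp mu p g}"
      using g by (simp add: continuous_on_const)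
  qed
qed

end
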